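(* Let $G$ be a finite abelian $2$-group of order $2^n$, $n\geq 3$, which is not elementary abelian. Then for every $0\leq k\leq n$, $$s_k(G)\leq s_k(D_8\times C_2^{n-3}).$$
   Context: For a finite $2$-group $G$ of order $2^n$ and $0\le k\le n$, $s_k(G)$ denotes the number of subgroups of $G$ of order $2^k$. $D_8$ is the dihedral group of order $8$ and $C_2^{m}$ is the elementary abelian $2$-group of order $2^m$. *)

theory Defs
  imports "HOL-Algebra.Algebra"
begin

definition num_subgroups_of_order :: "nat \<Rightarrow> ('a, 'b) monoid_scheme \<Rightarrow> nat" where
  "num_subgroups_of_order k G = card {H. subgroup H G \<and> card H = 2 ^ k}"

text \<open>Dihedral group of order 8: (a, b) represents r^a s^(if b then 1 else 0), a < 4,
  with r^4 = s^2 = 1 and s r s = r^-1.\<close>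
definition D8 :: "(nat \<times> bool) monoid" where
  "D8 = \<lparr> carrier = {(a, b). a < 4},
          monoid.mult = (\<lambda>(a1, b1) (a2, b2). ((a1 + (if b1 then 4 - a2 else a2)) mod 4, b1 \<noteq> b2)),
          one = (0, False) \<rparr>"

definition C2pow :: "nat \<Rightarrow> (nat \<Rightarrow> bool) monoid" where
  "C2pow m = \<lparr> carrier = {v. \<forall>i\<ge>m. \<not> v i},
               monoid.mult = (\<lambda>v w i. v i \<noteq> w i),
               one = (\<lambda>_. False) \<rparr>"

end

theory Submission
  imports Defs
begin

section \<open>Gaussian-type numbers\<close>

fun gg :: "nat \<Rightarrow> nat \<Rightarrow> nat" where
  "gg a 0 = 1"
| "gg 0 (Suc b) = 0"
| "gg (Suc a) (Suc b) = gg a (Suc b) + 2 ^ (a - b) * gg a b"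

lemma gg_zero: "a < b \<Longrightarrow> gg a b = 0"
proof (induction a arbitrary: b)
  case 0 then show ?case by (cases b) auto
next
  case (Suc a) then show ?case by (cases b) auto
qed

lemma gg_mono1: "gg a b \<le> gg (Suc a) b"
  by (cases b) auto

lemma gg_shift1: "gg a b \<le> gg (Suc a) (Suc b)"
proof (cases "b \<le> a")
  case True
  have h: "1 \<le> (2::nat)^(a-b)" by simp
  then have "gg a b \<le> 2^(a-b) * gg a b" by (metis mult_1 mult_le_mono1)
  then show ?thesis by (simp add: trans_le_add2)
next
  case False then show ?thesis by (simp add: gg_zero)
qed

lemma gg_shift: "gg a b \<le> gg (a + c) (b + c)"
proof (induction c)
  case 0 then show ?case by simp
next
  case (Suc c) then show ?case using gg_shift1[of "a + c" "b + c"] by simp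
qed

lemma gg_step:
  assumes "p < j" "j \<le> m"
  shows "gg (m - p) (j - p) = gg (m - 1 - p) (j - p) + 2 ^ (m - j) * gg (m - 1 - p) (j - 1 - p)"
proof -
  have e1: "m - p = Suc (m - 1 - p)" using assms by auto
  have e2: "j - p = Suc (j - 1 - p)" using assms by auto
  have e3: "(m - 1 - p) - (j - 1 - p) = m - j" using assms by auto
  show ?thesis unfolding e1 e2 by (simp only: gg.simps e3)
qed

lemma pow2_dvd: "(d::nat) dvd 2 ^ n \<Longrightarrow> \<exists>i\<le>n. d = 2 ^ i"
  using divides_primepow_nat[OF two_is_prime_nat] by blast

lemma subgroup_card_dvd:
  fixes G (structure)
  assumes "group G" "finite (carrier G)" "subgroup H G"
  shows "card H dvd card (carrier G)"
proof -
  interpret group G by fact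
  have "card (rcosets H) * card H = order G" using lagrange assms(3) by blast
  then show ?thesis unfolding order_def by (metis dvd_triv_right)
qed

lemma subgroup_sub_iff:
  fixes G (structure)
  assumes "group G" "subgroup M G"
  shows "subgroup K (G\<lparr>carrier := M\<rparr>) \<longleftrightarrow> subgroup K G \<and> K \<subseteq> M"
proof
  interpret group G by fact
  assume a: "subgroup K (G\<lparr>carrier := M\<rparr>)"
  then have "subgroup K G" using incl_subgroup assms(2) by blast
  moreover have "K \<subseteq> M" using subgroup.subset[OF a] by simp
  ultimately show "subgroup K G \<and> K \<subseteq> M" by blast
next
  interpret group G by fact
  assume "subgroup K G \<and> K \<subseteq> M"
  then show "subgroup K (G\<lparr>carrier := M\<rparr>)" using subgroup_incl assms(2) by blast
qed

lemma comm_group_sub: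
  fixes G (structure)
  assumes "comm_group G" "subgroup M G"
  shows "comm_group (G\<lparr>carrier := M\<rparr>)"
proof -
  interpret comm_group G by fact
  have "group (G\<lparr>carrier := M\<rparr>)" using subgroup_imp_group assms(2) by blast
  then show ?thesis
    apply (rule group.group_comm_groupI)
    using subgroup.subset[OF assms(2)] m_comm by auto
qed

lemma rcos_outside:
  fixes G (structure)
  assumes "group G" "subgroup M G" "subgroup K G" "K \<subseteq> M" "x \<in> carrier G - M"
  shows "K #>\<^bsub>G\<^esub> x \<subseteq> carrier G - M"
proof
  interpret group G by fact
  fix y assume "y \<in> K #> x"
  then obtain k where k: "k \<in> K" "y = k \<otimes> x" unfolding r_coset_def by auto
  have kc: "k \<in> carrier G" using k assms(3) subgroup.subset by blast
  have xc: "x \<in> carrier G" using assms(5) by blast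
  have "y \<in> carrier G" using k kc xc by simp
  moreover have "y \<notin> M"
  proof
    assume "y \<in> M"
    moreover have "inv k \<in> M" using subgroup.m_inv_closed[OF assms(2)] k(1) assms(4) by (meson subsetD)
    ultimately have "inv k \<otimes> y \<in> M" using subgroup.m_closed[OF assms(2)] by simp
    moreover have "inv k \<otimes> y = x" unfolding k(2) using kc xc by (metis l_inv l_one m_assoc inv_closed)
    ultimately show False using assms(5) by simp
  qed
  ultimately show "y \<in> carrier G - M" by blast
qed

lemma cos_count:
  fixes G (structure)
  assumes "group G" "finite (carrier G)" "subgroup M G" "subgroup K G" "K \<subseteq> M"
    and "XX \<subseteq> carrier G - M"
    and "\<And>k x. k \<in> K \<Longrightarrow> x \<in> XX \<Longrightarrow> k \<otimes>\<^bsub>G\<^esub> x \<in> XX"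
  shows "card ((\<lambda>x. K #>\<^bsub>G\<^esub> x) ` XX) * card K = card XX"
proof -
  interpret group G by fact
  let ?C = "(\<lambda>x. K #> x) ` XX"
  have Kc: "K \<subseteq> carrier G" using assms(4) subgroup.subset by blast
  have fin: "finite XX" using assms(2,6) finite_subset by blast
  have U: "\<Union>?C = XX"
  proof
    show "\<Union>?C \<subseteq> XX" using assms(7) unfolding r_coset_def by auto
    show "XX \<subseteq> \<Union>?C"
    proof
      fix x assume "x \<in> XX"
      then have "x \<in> K #> x" using rcos_self assms(4,6) by blast
      then show "x \<in> \<Union>?C" using \<open>x \<in> XX\<close> by blast
    qed
  qed
  have "card K * card ?C = card (\<Union>?C)"
  proof (rule card_partition)
    show "finite ?C" using fin by simp
    show "finite (\<Union>?C)" using U fin by simp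
    show "card c = card K" if "c \<in> ?C" for c
    proof -
      from that obtain x where "x \<in> XX" "c = K #> x" by blast
      then have "c \<in> rcosets K" using rcosetsI Kc assms(6) by blast
      then show "card c = card K" using card_rcosets_equal Kc by metis
    qed
    show "c1 \<inter> c2 = {}" if "c1 \<in> ?C" "c2 \<in> ?C" "c1 \<noteq> c2" for c1 c2
    proof -
      have "c1 \<in> rcosets K" "c2 \<in> rcosets K" using that rcosetsI Kc assms(6) by blast+
      then show "c1 \<inter> c2 = {}" using rcos_disjoint[OF assms(4)] \<open>c1 \<noteq> c2\<close>
        unfolding pairwise_def disjnt_def by blast
    qed
  qed
  then show ?thesis using U by (simp add: mult.commute)
qed

lemma idx2:
  fixes G (structure)
  assumes "group G" "finite (carrier G)" "subgroup M G" "2 * card M = card (carrier G)"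
    and "x \<in> carrier G - M" "y \<in> carrier G - M"
  shows "y \<in> M #>\<^bsub>G\<^esub> x"
proof -
  interpret group G by fact
  have Mc: "M \<subseteq> carrier G" using assms(3) subgroup.subset by blast
  have sub: "M #> x \<subseteq> carrier G - M"
    using rcos_outside[OF assms(1,3,3) _ assms(5)] by blast
  have cM: "card (M #> x) = card M"
    using card_rcosets_equal[OF rcosetsI[OF Mc] Mc] assms(5) by (metis DiffD1)
  have fM: "finite M" using assms(2) Mc finite_subset by blast
  have fx: "finite (M #> x)" using assms(2) sub finite_subset by blast
  have "card (M \<union> (M #> x)) = card M + card (M #> x)"
    using sub fM fx card_Un_disjoint[of M "M #> x"] by blast
  then have "card (M \<union> (M #> x)) = card (carrier G)" using cM assms(4) by simp
  moreover have "M \<union> (M #> x) \<subseteq> carrier G" using Mc sub by blast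
  ultimately have "M \<union> (M #> x) = carrier G" using assms(2) card_subset_eq by blast
  then show ?thesis using assms(6) by blast
qed

lemma idx2_split:
  fixes G (structure)
  assumes "group G" "finite (carrier G)" "subgroup M G" "2 * card M = card (carrier G)"
    and "subgroup K G" "x \<in> K - M"
  shows "K - M = (K \<inter> M) #>\<^bsub>G\<^esub> x" and "card K = 2 * card (K \<inter> M)"
proof -
  interpret group G by fact
  have Kc: "K \<subseteq> carrier G" using assms(5) subgroup.subset by blast
  have xc: "x \<in> carrier G" using assms(6) Kc by blast
  have KM: "subgroup (K \<inter> M) G" using assms(3,5) subgroups_Inter_pair by blast
  show eq: "K - M = (K \<inter> M) #> x"
  proof
    show "K - M \<subseteq> (K \<inter> M) #> x"
    proof
      fix y assume y: "y \<in> K - M"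
      have yc: "y \<in> carrier G" using y Kc by blast
      have "y \<in> M #> x" using idx2[OF assms(1-4), of x y] y xc yc assms(6) by blast
      then obtain m where m: "m \<in> M" "y = m \<otimes> x" unfolding r_coset_def by auto
      have mc: "m \<in> carrier G" using m assms(3) subgroup.subset by blast
      have "m = y \<otimes> inv x" using m mc xc by (simp add: m_assoc)
      then have "m \<in> K" using y assms(5,6) subgroup.m_closed subgroup.m_inv_closed by (metis DiffD1)
      then show "y \<in> (K \<inter> M) #> x" using m unfolding r_coset_def by blast
    qed
    show "(K \<inter> M) #> x \<subseteq> K - M"
    proof -
      have "(K \<inter> M) #> x \<subseteq> carrier G - M"
        using rcos_outside[OF assms(1,3) KM _ ] xc assms(6) by blast
      moreover have "(K \<inter> M) #> x \<subseteq> K"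
        using assms(5,6) subgroup.m_closed unfolding r_coset_def by fastforce
      ultimately show ?thesis by blast
    qed
  qed
  have fK: "finite K" using assms(2) Kc finite_subset by blast
  have "card ((K \<inter> M) #> x) = card (K \<inter> M)"
    using card_rcosets_equal[OF rcosetsI[OF _ xc]] Kc by (metis inf.coboundedI1)
  moreover have "K = (K \<inter> M) \<union> (K - M)" by blast
  ultimately show "card K = 2 * card (K \<inter> M)"
    using fK eq by (metis card_Un_disjoint Diff_disjoint finite_Diff finite_Int inf_commute
        mult_2 Int_Diff_disjoint)
qed


lemma rcos_mem:
  fixes G (structure)
  shows "y \<in> K #> x \<longleftrightarrow> (\<exists>k\<in>K. y = k \<otimes> x)"
  unfolding r_coset_def by auto

lemma double_sub:
  fixes G (structure)
  assumes "comm_group G" "subgroup K G" "x \<in> carrier G" "x \<otimes> x \<in> K"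
  shows "subgroup (K \<union> (K #> x)) G"
proof -
  interpret comm_group G by fact
  have Kc: "K \<subseteq> carrier G" using subgroup.subset[OF assms(2)] .
  have xx: "x \<otimes> x \<in> carrier G" using assms(3) by simp
  have mc: "k1 \<otimes> k2 \<in> K" if "k1 \<in> K" "k2 \<in> K" for k1 k2
    using subgroup.m_closed[OF assms(2) that] .
  have ic: "inv k \<in> K" if "k \<in> K" for k
    using subgroup.m_inv_closed[OF assms(2) that] .
  have kc: "k \<in> carrier G" if "k \<in> K" for k using that Kc by blast
  show ?thesis
  proof (rule subgroupI)
    show "K \<union> (K #> x) \<subseteq> carrier G"
      using Kc r_coset_subset_G[OF Kc assms(3)] by blast
    show "K \<union> (K #> x) \<noteq> {}" using subgroup.one_closed[OF assms(2)] by blast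
  next
    fix a assume "a \<in> K \<union> (K #> x)"
    then consider "a \<in> K" | k where "k \<in> K" "a = k \<otimes> x" unfolding Un_iff rcos_mem by blast
    then show "inv a \<in> K \<union> (K #> x)"
    proof cases
      case 1 then show ?thesis using ic by blast
    next
      case 2
      have e: "inv a = (inv k \<otimes> inv (x \<otimes> x)) \<otimes> x"
        using 2 kc[OF 2(1)] assms(3) by (simp add: inv_mult m_assoc)
      have "inv k \<otimes> inv (x \<otimes> x) \<in> K" using mc ic 2(1) assms(4) by blast
      then show ?thesis unfolding e Un_iff rcos_mem by blast
    qed
  next
    fix a b assume a: "a \<in> K \<union> (K #> x)" and b: "b \<in> K \<union> (K #> x)"
    from a consider "a \<in> K" | k where "k \<in> K" "a = k \<otimes> x" unfolding Un_iff rcos_mem by blast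
    then show "a \<otimes> b \<in> K \<union> (K #> x)"
    proof cases
      case 1
      from b consider "b \<in> K" | l where "l \<in> K" "b = l \<otimes> x" unfolding Un_iff rcos_mem by blast
      then show ?thesis
      proof cases
        case 1 then show ?thesis using mc \<open>a \<in> K\<close> by blast
      next
        case 2
        have "a \<otimes> b = (a \<otimes> l) \<otimes> x" using 2 kc[OF 2(1)] kc[OF \<open>a \<in> K\<close>] assms(3) by (simp add: m_assoc)
        then show ?thesis using mc[OF \<open>a \<in> K\<close> 2(1)] unfolding Un_iff rcos_mem by blast
      qed
    next
      case 2
      from b consider "b \<in> K" | l where "l \<in> K" "b = l \<otimes> x" unfolding Un_iff rcos_mem by blast
      then show ?thesis
      proof cases
        case 1
        have "a \<otimes> b = (k \<otimes> b) \<otimes> x" using 2 kc[OF 2(1)] kc[OF \<open>b \<in> K\<close>] assms(3) by (simp add: m_ac)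
        then show ?thesis using mc[OF 2(1) \<open>b \<in> K\<close>] unfolding Un_iff rcos_mem by blast
      next
        case 3: 2
        have "a \<otimes> b = (k \<otimes> l) \<otimes> (x \<otimes> x)"
          using 2 3 kc[OF 2(1)] kc[OF 3(1)] assms(3) by (simp add: m_ac)
        then show ?thesis using mc[OF mc[OF 2(1) 3(1)] assms(4)] by (metis UnI1)
      qed
    qed
  qed
qed

lemma finite_subgroups:
  assumes "finite (carrier G)"
  shows "finite {K. subgroup K G \<and> Q K}"
proof -
  have "{K. subgroup K G \<and> Q K} \<subseteq> Pow (carrier G)" by (auto dest: subgroup.subset)
  then show ?thesis using finite_subset[OF _ finite_Pow_iff[THEN iffD2, OF assms]] by blast
qed

lemma card_subgroup_pos:
  assumes "finite (carrier G)" "subgroup K G"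
  shows "finite K" "card K > 0"
proof -
  show f: "finite K" using assms(1) subgroup.subset[OF assms(2)] finite_subset by blast
  have "\<one>\<^bsub>G\<^esub> \<in> K" using subgroup.one_closed[OF assms(2)] .
  then show "card K > 0" using f card_gt_0_iff by blast
qed

lemma ex_idx2:
  fixes G (structure)
  assumes "comm_group G" "finite (carrier G)" "card (carrier G) = 2^m" "subgroup P G" "P \<noteq> carrier G"
  shows "\<exists>M. subgroup M G \<and> P \<subseteq> M \<and> 2 * card M = card (carrier G)"
  using assms(4,5)
proof (induction "card (carrier G) - card P" arbitrary: P rule: less_induct)
  case less
  interpret comm_group G by fact
  have Pc: "P \<subseteq> carrier G" using subgroup.subset[OF less.prems(1)] .
  then obtain y where y: "y \<in> carrier G" "y \<notin> P" using less.prems(2) by blast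
  have "y [^] order G = \<one>" using pow_order_eq_1[OF y(1)] .
  then have ym: "y [^] ((2::nat)^m) \<in> P" using assms(3) subgroup.one_closed[OF less.prems(1)]
    unfolding order_def by simp
  define i where "i = (LEAST i. y [^] ((2::nat)^i) \<in> P)"
  have iP: "y [^] ((2::nat)^i) \<in> P" unfolding i_def using ym by (rule LeastI)
  have y1: "y [^] (1::nat) = y" using y(1) by (metis One_nat_def nat_pow_Suc nat_pow_0 l_one)
  have i0: "i \<noteq> 0"
  proof
    assume "i = 0"
    then have "y \<in> P" using iP y1 by simp
    then show False using y(2) by blast
  qed
  define x where "x = y [^] ((2::nat)^(i - 1))"
  have xc: "x \<in> carrier G" unfolding x_def using y(1) by simp
  have xP: "x \<notin> P"
  proof
    assume "x \<in> P"
    then have "i \<le> i - 1" unfolding x_def i_def by (rule Least_le)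
    then show False using i0 by simp
  qed
  have "x \<otimes> x = y [^] ((2::nat)^(i - 1) + 2^(i-1))" unfolding x_def using y(1) nat_pow_mult by simp
  also have "(2::nat)^(i - 1) + 2^(i-1) = 2^i" using i0 by (cases i) auto
  finally have xx: "x \<otimes> x \<in> P" using iP by simp
  define P' where "P' = P \<union> (P #> x)"
  have sP': "subgroup P' G" unfolding P'_def using double_sub[OF assms(1) less.prems(1) xc xx] .
  have out: "P #> x \<subseteq> carrier G - P"
    using rcos_outside[OF is_group less.prems(1) less.prems(1) _ ] xc xP by blast
  have fP: "finite P" using card_subgroup_pos[OF assms(2) less.prems(1)] by blast
  have cx: "card (P #> x) = card P"
    using card_rcosets_equal[OF rcosetsI[OF Pc xc] Pc] by simp
  have fx: "finite (P #> x)" using out assms(2) finite_subset by blast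
  have cP': "card P' = 2 * card P" unfolding P'_def
  proof -
    have "P \<inter> (P #> x) = {}" using out by blast
    then show "card (P \<union> (P #> x)) = 2 * card P" using card_Un_disjoint[OF fP fx] cx by simp
  qed
  have P'c: "P' \<subseteq> carrier G" using subgroup.subset[OF sP'] .
  show ?case
  proof (cases "P' = carrier G")
    case True
    then show ?thesis using less.prems(1) cP' by auto
  next
    case False
    have "card P' \<le> card (carrier G)" using P'c assms(2) card_mono by blast
    moreover have "card P > 0" using card_subgroup_pos[OF assms(2) less.prems(1)] by blast
    ultimately have "card (carrier G) - card P' < card (carrier G) - card P" using cP' by linarith
    then obtain M where "subgroup M G" "P' \<subseteq> M" "2 * card M = card (carrier G)"
      using less.hyps[OF _ sP' False] by blast
    then show ?thesis unfolding P'_def by blast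
  qed
qed


lemma card_sub_lt:
  assumes "finite (carrier G)" "subgroup K G" "card (carrier G) = 2^m" "card K = 2^j"
  shows "j \<le> m"
proof -
  have "card K \<le> card (carrier G)" using card_mono[OF assms(1) subgroup.subset[OF assms(2)]] .
  then have "(2::nat)^j \<le> 2^m" using assms(3,4) by simp
  then show ?thesis by simp
qed

lemma sub_card_eq:
  assumes "finite (carrier G)" "subgroup K G" "P \<subseteq> K" "card K \<le> card P"
  shows "K = P"
proof -
  have "finite K" using card_subgroup_pos[OF assms(1,2)] by blast
  then show ?thesis using assms(3,4) card_seteq by blast
qed

lemma GL:
  assumes "comm_group G" "finite (carrier G)" "card (carrier G) = 2^m" "subgroup P G" "card P = 2^p"
  shows "card {K. subgroup K G \<and> P \<subseteq> K \<and> card K = 2^j} \<le> gg (m - p) (j - p)"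
  using assms
proof (induction m arbitrary: G P p j rule: less_induct)
  case (less m)
  interpret comm_group G by fact
  define S where "S = {K. subgroup K G \<and> P \<subseteq> K \<and> card K = 2^j}"
  have finS: "finite S" unfolding S_def using finite_subgroups[OF less.prems(2)] .
  have Pc: "P \<subseteq> carrier G" using subgroup.subset[OF less.prems(4)] .
  show ?case
  proof (cases "P = carrier G")
    case True
    then have "(2::nat)^m = 2^p" using less.prems(3,5) by simp
    then have mp: "m = p" by simp
    have sub: "S \<subseteq> {carrier G}"
    proof
      fix K assume "K \<in> S"
      then have "subgroup K G" "P \<subseteq> K" unfolding S_def by auto
      then show "K \<in> {carrier G}" using subgroup.subset[OF \<open>subgroup K G\<close>] True by auto
    qed
    show ?thesis
    proof (cases "j \<le> p")
      case True
      have "card S \<le> 1" using card_mono[OF _ sub] by simp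
      then show ?thesis unfolding S_def using True mp by simp
    next
      case False
      have "S = {}"
      proof -
        { fix K assume "K \<in> S"
          then have "K = carrier G" "card K = 2^j" using sub unfolding S_def by auto
          then have "(2::nat)^j = 2^p" using less.prems(3) mp by simp
          then have False using False by simp
          }
        then show ?thesis by blast
      qed
      then show ?thesis unfolding S_def[symmetric] by simp
    qed
  next
    case False
    obtain M where M: "subgroup M G" "P \<subseteq> M" "2 * card M = card (carrier G)"
      using ex_idx2[OF less.prems(1-4) False] by blast
    have m1: "m \<ge> 1" using M(3) less.prems(3) by (cases m) auto
    obtain m' where mm': "m = Suc m'" using m1 by (cases m) auto
    have "2 * card M = 2 * 2^m'" using M(3) less.prems(3) mm' by simp
    then have cM: "card M = 2^(m-1)" using mm' by simp
    have mlt: "m - 1 < m" using m1 by simp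
    define GM where "GM = G\<lparr>carrier := M\<rparr>"
    have GMc: "comm_group GM" unfolding GM_def using comm_group_sub[OF less.prems(1) M(1)] .
    have GMf: "finite (carrier GM)" unfolding GM_def using card_subgroup_pos[OF less.prems(2) M(1)] by simp
    have GMcard: "card (carrier GM) = 2^(m-1)" unfolding GM_def using cM by simp
    have sgiff: "subgroup K GM \<longleftrightarrow> subgroup K G \<and> K \<subseteq> M" for K
      unfolding GM_def using subgroup_sub_iff[OF is_group M(1)] .
    have PGM: "subgroup P GM" using sgiff less.prems(4) M(2) by blast
    have pm: "p < m"
    proof -
      have "card P < card (carrier G)" using psubset_card_mono[OF less.prems(2)] Pc False by blast
      then have "(2::nat)^p < 2^m" using less.prems(3,5) by simp
      then show ?thesis by simp
    qed
    define S1 where "S1 = {K. subgroup K GM \<and> P \<subseteq> K \<and> card K = 2^j}"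
    define S2 where "S2 = {K \<in> S. \<not> K \<subseteq> M}"
    have S12: "S = S1 \<union> S2" unfolding S1_def S2_def S_def using sgiff by blast
    have dis: "S1 \<inter> S2 = {}" unfolding S1_def S2_def using sgiff by blast
    have finS1: "finite S1" using finS S12 by simp
    have finS2: "finite S2" using finS S12 by simp
    have cS: "card S = card S1 + card S2" using S12 dis card_Un_disjoint[OF finS1 finS2] by simp
    have IH1: "card S1 \<le> gg (m - 1 - p) (j - p)"
      unfolding S1_def by (rule less.IH[OF mlt GMc GMf GMcard PGM less.prems(5)])
    show ?thesis
    proof (cases "j \<le> p")
      case True
      have "S2 = {}"
      proof -
        { fix K assume K: "K \<in> S2"
          then have "subgroup K G" "P \<subseteq> K" "card K = 2^j" "\<not> K \<subseteq> M" unfolding S2_def S_def by auto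
          moreover have "card K \<le> card P" using True less.prems(5) \<open>card K = 2^j\<close> by simp
          ultimately have "K = P" using sub_card_eq[OF less.prems(2)] by blast
          then have False using M(2) \<open>\<not> K \<subseteq> M\<close> by blast
          }
        then show ?thesis by blast
      qed
      then have "card S \<le> gg (m - 1 - p) (j - p)" using cS IH1 by simp
      also have "\<dots> \<le> gg (m - p) (j - p)"
        using gg_mono1[of "m - 1 - p" "j - p"] pm by (simp add: Suc_diff_Suc)
      finally show ?thesis unfolding S_def .
    next
      case jp: False
      show ?thesis
      proof (cases "j \<le> m")
        case False
        have "S = {}"
          using card_sub_lt[OF less.prems(2) _ less.prems(3)] False unfolding S_def by blast
        then show ?thesis unfolding S_def[symmetric] by simp
      next
        case jm: True
        define T where "T = {K. subgroup K GM \<and> P \<subseteq> K \<and> card K = 2^(j-1)}"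
        have IH2: "card T \<le> gg (m - 1 - p) (j - 1 - p)"
          unfolding T_def by (rule less.IH[OF mlt GMc GMf GMcard PGM less.prems(5)])
        have finT: "finite T" unfolding T_def using finite_subgroups[OF GMf] .
        define Cos where "Cos = (\<lambda>K'. (\<lambda>x. K' #>\<^bsub>G\<^esub> x) ` (carrier G - M))"
        have finM: "finite M" using card_subgroup_pos[OF less.prems(2) M(1)] by blast
        have "card (carrier G - M) = card (carrier G) - card M"
          using card_Diff_subset[OF finM subgroup.subset[OF M(1)]] .
        then have cCM: "card (carrier G - M) = 2^(m-1)" using M(3) cM by simp
        have cCos: "card (Cos K') = 2^(m-j)" if "K' \<in> T" for K'
        proof -
          have K0: "subgroup K' GM" "card K' = 2^(j-1)" using that unfolding T_def by auto
          have K': "subgroup K' G" "K' \<subseteq> M" "card K' = 2^(j-1)" using K0 sgiff[of K'] by auto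
          have inv: "k \<otimes>\<^bsub>G\<^esub> x \<in> carrier G - M" if "k \<in> K'" "x \<in> carrier G - M" for k x
          proof -
            have "k \<otimes>\<^bsub>G\<^esub> x \<in> K' #>\<^bsub>G\<^esub> x" unfolding rcos_mem using that(1) by blast
            then show ?thesis using rcos_outside[OF is_group M(1) K'(1) K'(2) that(2)] by blast
          qed
          have "card (Cos K') * card K' = card (carrier G - M)" unfolding Cos_def
            using cos_count[OF is_group less.prems(2) M(1) K'(1) K'(2) subset_refl inv] .
          then have "card (Cos K') * 2^(j-1) = 2^(m-j) * 2^(j-1)"
            using K'(3) cCM jm jp by (simp add: power_add[symmetric])
          then show ?thesis by simp
        qed
        have finCos: "finite (Cos K')" for K' unfolding Cos_def using less.prems(2) by simp
        define f where "f = (\<lambda>K. (K \<inter> M, K - M))"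
        have inj: "inj_on f S2" unfolding f_def inj_on_def by (metis Int_Diff_Un prod.inject)
        have img: "f ` S2 \<subseteq> Sigma T Cos"
        proof
          fix z assume "z \<in> f ` S2"
          then obtain K where K: "K \<in> S2" "z = f K" by blast
          have Ks: "subgroup K G" "P \<subseteq> K" "card K = 2^j" "\<not> K \<subseteq> M" using K(1) unfolding S2_def S_def by auto
          obtain x where x: "x \<in> K - M" using Ks(4) by blast
          have e1: "K - M = (K \<inter> M) #>\<^bsub>G\<^esub> x" and e2: "card K = 2 * card (K \<inter> M)"
            using idx2_split[OF is_group less.prems(2) M(1) M(3) Ks(1) x] by auto
          obtain j' where jj': "j = Suc j'" using jp by (cases j) auto
          have "2 * card (K \<inter> M) = 2 * 2^j'" using e2 Ks(3) jj' by simp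
          then have "card (K \<inter> M) = 2^(j-1)" using jj' by simp
          moreover have "subgroup (K \<inter> M) GM" using sgiff[of "K \<inter> M"] subgroups_Inter_pair[OF Ks(1) M(1)] by blast
          ultimately have "K \<inter> M \<in> T" unfolding T_def using Ks(2) M(2) by blast
          moreover have "x \<in> carrier G - M" using x subgroup.subset[OF Ks(1)] by blast
          ultimately have "K \<inter> M \<in> T" "K - M \<in> Cos (K \<inter> M)" unfolding Cos_def using e1 by auto
          then show "z \<in> Sigma T Cos" unfolding K(2) f_def by blast
        qed
        have "card S2 \<le> card (Sigma T Cos)"
          using card_inj_on_le[OF inj img] finT finCos by simp
        also have "\<dots> = (\<Sum>K'\<in>T. card (Cos K'))" using finT finCos by simp
        also have "\<dots> = card T * 2^(m-j)" using cCos by simp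
        finally have "card S2 \<le> card T * 2^(m-j)" .
        moreover have "card T * 2^(m-j) \<le> gg (m - 1 - p) (j - 1 - p) * 2^(m-j)"
          using IH2 by (rule mult_le_mono1)
        ultimately have "card S \<le> gg (m - 1 - p) (j - p) + gg (m - 1 - p) (j - 1 - p) * 2^(m-j)"
          using cS IH1 by linarith
        also have "\<dots> = gg (m - p) (j - p)" using gg_step[of p j m] jp jm by simp
        finally show ?thesis unfolding S_def .
      qed
    qed
  qed
qed


lemma LL:
  assumes "comm_group G" "finite (carrier G)" "card (carrier G) = 2^m" "subgroup P G" "card P = 2^p"
    and "\<forall>x\<in>carrier G. x \<otimes>\<^bsub>G\<^esub> x = \<one>\<^bsub>G\<^esub>" "p \<le> j"
  shows "gg (m - p) (j - p) \<le> card {K. subgroup K G \<and> P \<subseteq> K \<and> card K = 2^j}"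
  using assms
proof (induction m arbitrary: G P p j rule: less_induct)
  case (less m)
  interpret comm_group G by fact
  define S where "S = {K. subgroup K G \<and> P \<subseteq> K \<and> card K = 2^j}"
  have finS: "finite S" unfolding S_def using finite_subgroups[OF less.prems(2)] .
  have Pc: "P \<subseteq> carrier G" using subgroup.subset[OF less.prems(4)] .
  show ?case
  proof (cases "j \<le> m")
    case False
    moreover have "p \<le> m" using card_sub_lt[OF less.prems(2) less.prems(4) less.prems(3) less.prems(5)] .
    ultimately have "m - p < j - p" using less.prems(7) by linarith
    then have "gg (m - p) (j - p) = 0" by (rule gg_zero)
    then show ?thesis by simp
  next
    case jm: True
    show ?thesis
    proof (cases "j = p")
      case True
      have "P \<in> S" unfolding S_def using less.prems(4,5) True by blast
      then have "0 < card S" using finS card_gt_0_iff by blast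
      then have "card S \<ge> 1" by simp
      then show ?thesis unfolding S_def[symmetric] using True by simp
    next
      case False
      then have jp: "p < j" using less.prems(7) by simp
      have pm: "p < m" using jp jm by simp
      have Pne: "P \<noteq> carrier G"
      proof
        assume "P = carrier G"
        then have "(2::nat)^p = 2^m" using less.prems(3,5) by simp
        then show False using pm by simp
      qed
      obtain M where M: "subgroup M G" "P \<subseteq> M" "2 * card M = card (carrier G)"
        using ex_idx2[OF less.prems(1-4) Pne] by blast
      have m1: "m \<ge> 1" using pm by simp
      obtain m' where mm': "m = Suc m'" using m1 by (cases m) auto
      have "2 * card M = 2 * 2^m'" using M(3) less.prems(3) mm' by simp
      then have cM: "card M = 2^(m-1)" using mm' by simp
      have mlt: "m - 1 < m" using m1 by simp
      define GM where "GM = G\<lparr>carrier := M\<rparr>"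
      have GMc: "comm_group GM" unfolding GM_def using comm_group_sub[OF less.prems(1) M(1)] .
      have GMf: "finite (carrier GM)" unfolding GM_def using card_subgroup_pos[OF less.prems(2) M(1)] by simp
      have GMcard: "card (carrier GM) = 2^(m-1)" unfolding GM_def using cM by simp
      have sgiff: "subgroup K GM \<longleftrightarrow> subgroup K G \<and> K \<subseteq> M" for K
        unfolding GM_def using subgroup_sub_iff[OF is_group M(1)] .
      have PGM: "subgroup P GM" using sgiff[of P] less.prems(4) M(2) by blast
      have GMel: "\<forall>x\<in>carrier GM. x \<otimes>\<^bsub>GM\<^esub> x = \<one>\<^bsub>GM\<^esub>"
      proof
        fix x assume "x \<in> carrier GM"
        then have "x \<in> carrier G" using subgroup.subset[OF M(1)] unfolding GM_def by auto
        then show "x \<otimes>\<^bsub>GM\<^esub> x = \<one>\<^bsub>GM\<^esub>" unfolding GM_def using less.prems(6) by simp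
      qed
      define S1 where "S1 = {K. subgroup K GM \<and> P \<subseteq> K \<and> card K = 2^j}"
      define S2 where "S2 = {K \<in> S. \<not> K \<subseteq> M}"
      have S12: "S = S1 \<union> S2" unfolding S1_def S2_def S_def using sgiff by blast
      have dis: "S1 \<inter> S2 = {}" unfolding S1_def S2_def using sgiff by blast
      have finS1: "finite S1" using finS S12 by simp
      have finS2: "finite S2" using finS S12 by simp
      have cS: "card S = card S1 + card S2" using S12 dis card_Un_disjoint[OF finS1 finS2] by simp
      have IH1: "gg (m - 1 - p) (j - p) \<le> card S1"
        unfolding S1_def by (rule less.IH[OF mlt GMc GMf GMcard PGM less.prems(5) GMel less.prems(7)])
      define T where "T = {K. subgroup K GM \<and> P \<subseteq> K \<and> card K = 2^(j-1)}"
      have pj1: "p \<le> j - 1" using jp by simp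
      have IH2: "gg (m - 1 - p) (j - 1 - p) \<le> card T"
        unfolding T_def by (rule less.IH[OF mlt GMc GMf GMcard PGM less.prems(5) GMel pj1])
      have finT: "finite T" unfolding T_def using finite_subgroups[OF GMf] .
      define Cos where "Cos = (\<lambda>K'. (\<lambda>x. K' #>\<^bsub>G\<^esub> x) ` (carrier G - M))"
      have finM: "finite M" using card_subgroup_pos[OF less.prems(2) M(1)] by blast
      have "card (carrier G - M) = card (carrier G) - card M"
        using card_Diff_subset[OF finM subgroup.subset[OF M(1)]] .
      then have cCM: "card (carrier G - M) = 2^(m-1)" using M(3) cM by simp
      have Tprops: "subgroup K' G" "K' \<subseteq> M" "card K' = 2^(j-1)" "P \<subseteq> K'" if "K' \<in> T" for K'
      proof -
        have K0: "subgroup K' GM" "card K' = 2^(j-1)" "P \<subseteq> K'" using that unfolding T_def by auto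
        then show "subgroup K' G" "K' \<subseteq> M" "card K' = 2^(j-1)" "P \<subseteq> K'" using sgiff[of K'] by auto
      qed
      have cCos: "card (Cos K') = 2^(m-j)" if "K' \<in> T" for K'
      proof -
        note K' = Tprops[OF that]
        have inv: "k \<otimes>\<^bsub>G\<^esub> x \<in> carrier G - M" if "k \<in> K'" "x \<in> carrier G - M" for k x
        proof -
          have "k \<otimes>\<^bsub>G\<^esub> x \<in> K' #>\<^bsub>G\<^esub> x" unfolding rcos_mem using that(1) by blast
          then show ?thesis using rcos_outside[OF is_group M(1) K'(1) K'(2) that(2)] by blast
        qed
        have "card (Cos K') * card K' = card (carrier G - M)" unfolding Cos_def
          using cos_count[OF is_group less.prems(2) M(1) K'(1) K'(2) subset_refl inv] .
        then have "card (Cos K') * 2^(j-1) = 2^(m-j) * 2^(j-1)"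
          using K'(3) cCM jm jp by (simp add: power_add[symmetric])
        then show ?thesis by simp
      qed
      have finCos: "finite (Cos K')" for K' unfolding Cos_def using less.prems(2) by simp
      have CosProps: "C \<subseteq> carrier G - M" "\<exists>x\<in>carrier G - M. C = K' #>\<^bsub>G\<^esub> x"
        if aa: "K' \<in> T" "C \<in> Cos K'" for K' C
      proof -
        note K' = Tprops[OF aa(1)]
        obtain x where x: "x \<in> carrier G - M" "C = K' #>\<^bsub>G\<^esub> x" using aa(2) unfolding Cos_def by blast
        then show "C \<subseteq> carrier G - M" using rcos_outside[OF is_group M(1) K'(1) K'(2) x(1)] by blast
        show "\<exists>x\<in>carrier G - M. C = K' #>\<^bsub>G\<^esub> x" using x by blast
      qed
      define F where "F = (\<lambda>(K'::'a set, C::'a set). K' \<union> C)"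
      have Fsplit: "F z \<inter> M = fst z" "F z - M = snd z" if zz: "z \<in> Sigma T Cos" for z
      proof -
        obtain K' C where z: "z = (K', C)" "K' \<in> T" "C \<in> Cos K'" using zz by blast
        have "K' \<subseteq> M" using Tprops[OF z(2)] by blast
        moreover have "C \<subseteq> carrier G - M" using CosProps[OF z(2,3)] by blast
        ultimately show "F z \<inter> M = fst z" "F z - M = snd z" unfolding z F_def by auto
      qed
      have inj: "inj_on F (Sigma T Cos)"
      proof (rule inj_onI)
        fix z1 z2 assume a: "z1 \<in> Sigma T Cos" "z2 \<in> Sigma T Cos" "F z1 = F z2"
        have "fst z1 = fst z2" using Fsplit(1)[OF a(1)] Fsplit(1)[OF a(2)] a(3) by simp
        moreover have "snd z1 = snd z2" using Fsplit(2)[OF a(1)] Fsplit(2)[OF a(2)] a(3) by simp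
        ultimately show "z1 = z2" by (simp add: prod_eq_iff)
      qed
      have img: "F ` Sigma T Cos \<subseteq> S2"
      proof
        fix w assume "w \<in> F ` Sigma T Cos"
        then obtain z where zS: "z \<in> Sigma T Cos" and wz: "w = F z" by blast
        then obtain K' C where zKC: "z = (K', C)" "K' \<in> T" "C \<in> Cos K'" by blast
        then have z: "w = K' \<union> C" "K' \<in> T" "C \<in> Cos K'" using wz unfolding F_def by auto
        note K' = Tprops[OF z(2)]
        obtain x where x: "x \<in> carrier G - M" "C = K' #>\<^bsub>G\<^esub> x" using CosProps(2)[OF z(2,3)] by blast
        have xc: "x \<in> carrier G" using x(1) by blast
        have xx: "x \<otimes>\<^bsub>G\<^esub> x \<in> K'" using less.prems(6) xc subgroup.one_closed[OF K'(1)] by simp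
        have sg: "subgroup w G" unfolding z(1) x(2) using double_sub[OF less.prems(1) K'(1) xc xx] .
        have Cc: "C \<subseteq> carrier G - M" using CosProps(1)[OF z(2,3)] .
        have fK: "finite K'" using card_subgroup_pos[OF less.prems(2) K'(1)] by blast
        have fC: "finite C" using Cc less.prems(2) finite_subset by blast
        have cC: "card C = card K'" unfolding x(2)
          using card_rcosets_equal[OF rcosetsI[OF subgroup.subset[OF K'(1)] xc] subgroup.subset[OF K'(1)]] by simp
        have "K' \<inter> C = {}" using K'(2) Cc by blast
        then have "card w = 2 * 2^(j-1)" unfolding z(1) using card_Un_disjoint[OF fK fC] cC K'(3) by simp
        also have "\<dots> = 2^j"
        proof -
          obtain j' where jj': "j = Suc j'" using jp by (cases j) auto
          then show ?thesis by simp
        qed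
        finally have cw: "card w = 2^j" .
        have "x \<in> C" unfolding x(2) using rcos_self[OF xc K'(1)] .
        then have nM: "\<not> w \<subseteq> M" unfolding z(1) using x(1) by blast
        have "P \<subseteq> w" unfolding z(1) using K'(4) by blast
        then show "w \<in> S2" unfolding S2_def S_def using sg cw nM by blast
      qed
      have "2^(m-j) * card T = (\<Sum>K'\<in>T. card (Cos K'))" using cCos by simp
      also have "\<dots> = card (Sigma T Cos)" using finT finCos by simp
      also have "\<dots> = card (F ` Sigma T Cos)" using card_image[OF inj] by simp
      also have "\<dots> \<le> card S2" using card_mono[OF finS2 img] .
      finally have S2b: "2^(m-j) * card T \<le> card S2" .
      have "gg (m - p) (j - p) = gg (m - 1 - p) (j - p) + 2^(m-j) * gg (m - 1 - p) (j - 1 - p)"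
        using gg_step[of p j m] jp jm by simp
      also have "\<dots> \<le> card S1 + 2^(m-j) * card T"
        using add_mono[OF IH1 mult_le_mono2[OF IH2]] .
      also have "\<dots> \<le> card S" using cS S2b by simp
      finally show ?thesis unfolding S_def .
    qed
  qed
qed


lemma count_containing:
  assumes "comm_group G" "finite (carrier G)" "card (carrier G) = 2^m" "y \<in> carrier G" "y \<noteq> \<one>\<^bsub>G\<^esub>"
  shows "card {K. subgroup K G \<and> y \<in> K \<and> card K = 2^j} \<le> (if 1 \<le> j then gg (m - 1) (j - 1) else 0)"
proof -
  interpret comm_group G by fact
  define P where "P = generate G {y}"
  have sP: "subgroup P G" unfolding P_def using generate_is_subgroup assms(4) by simp
  have yP: "y \<in> P" unfolding P_def by (rule generate.incl) simp
  have oP: "\<one>\<^bsub>G\<^esub> \<in> P" using subgroup.one_closed[OF sP] .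
  obtain p where p: "p \<le> m" "card P = 2^p"
    using pow2_dvd[of "card P" m] subgroup_card_dvd[OF is_group assms(2) sP] assms(3) by auto
  have fP: "finite P" using card_subgroup_pos[OF assms(2) sP] by blast
  have "card {\<one>\<^bsub>G\<^esub>, y} \<le> card P" using card_mono[OF fP] yP oP by simp
  then have "2 \<le> card P" using assms(5) by simp
  then have p1: "1 \<le> p" using p(2) by (cases p) auto
  have sub: "{K. subgroup K G \<and> y \<in> K \<and> card K = 2^j} \<subseteq> {K. subgroup K G \<and> P \<subseteq> K \<and> card K = 2^j}"
  proof
    fix K assume "K \<in> {K. subgroup K G \<and> y \<in> K \<and> card K = 2^j}"
    then have K: "subgroup K G" "y \<in> K" "card K = 2^j" by auto
    have "P \<subseteq> K" unfolding P_def using generate_subgroup_incl[OF _ K(1)] K(2) by simp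
    then show "K \<in> {K. subgroup K G \<and> P \<subseteq> K \<and> card K = 2^j}" using K by simp
  qed
  have fin: "finite {K. subgroup K G \<and> P \<subseteq> K \<and> card K = 2^j}" using finite_subgroups[OF assms(2)] .
  show ?thesis
  proof (cases "p \<le> j")
    case True
    have "card {K. subgroup K G \<and> y \<in> K \<and> card K = 2^j} \<le> card {K. subgroup K G \<and> P \<subseteq> K \<and> card K = 2^j}"
      using card_mono[OF fin sub] .
    also have "\<dots> \<le> gg (m - p) (j - p)" using GL[OF assms(1-3) sP p(2)] .
    also have "\<dots> \<le> gg (m - p + (p - 1)) (j - p + (p - 1))" by (rule gg_shift)
    also have "m - p + (p - 1) = m - 1" using p(1) p1 by simp
    also have "j - p + (p - 1) = j - 1" using True p1 by simp
    finally show ?thesis using True p1 by simp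
  next
    case False
    have "{K. subgroup K G \<and> P \<subseteq> K \<and> card K = 2^j} = {}"
    proof -
      { fix K assume K: "subgroup K G" "P \<subseteq> K" "card K = 2^j"
        have "finite K" using card_subgroup_pos[OF assms(2) K(1)] by blast
        then have "card P \<le> card K" using card_mono K(2) by blast
        then have "(2::nat)^p \<le> 2^j" using p(2) K(3) by simp
        then have False using False by simp
      }
      then show ?thesis by blast
    qed
    then have "{K. subgroup K G \<and> y \<in> K \<and> card K = 2^j} = {}" using sub by blast
    then show ?thesis by (metis card.empty le0)
  qed
qed


lemma MU:
  fixes G (structure)
  assumes "comm_group G" "finite (carrier G)" "card (carrier G) = 2^n"
    and "\<exists>x\<in>carrier G. x \<otimes> x \<noteq> \<one>" "k \<le> n"
  shows "card {H. subgroup H G \<and> card H = 2^k}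
           \<le> gg (n - 1) k + 2^(n-k) * (if 2 \<le> k then gg (n - 2) (k - 2) else 0)"
proof -
  interpret comm_group G by fact
  define h where "h = (if 2 \<le> k then gg (n - 2) (k - 2) else 0)"
  define Om where "Om = {x \<in> carrier G. x \<otimes> x = \<one>}"
  have sOm: "subgroup Om G"
  proof (rule subgroupI)
    show "Om \<subseteq> carrier G" unfolding Om_def by blast
    show "Om \<noteq> {}" unfolding Om_def by auto
  next
    fix a assume "a \<in> Om"
    then have a: "a \<in> carrier G" "a \<otimes> a = \<one>" unfolding Om_def by auto
    have "inv a \<otimes> inv a = inv (a \<otimes> a)" using a(1) by (simp add: inv_mult)
    then show "inv a \<in> Om" unfolding Om_def using a by simp
  next
    fix a b assume "a \<in> Om" "b \<in> Om"
    then have a: "a \<in> carrier G" "a \<otimes> a = \<one>" "b \<in> carrier G" "b \<otimes> b = \<one>" unfolding Om_def by auto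
    have "(a \<otimes> b) \<otimes> (a \<otimes> b) = (a \<otimes> a) \<otimes> (b \<otimes> b)" using a by (simp add: m_ac)
    then show "a \<otimes> b \<in> Om" unfolding Om_def using a by simp
  qed
  have Omne: "Om \<noteq> carrier G" using assms(4) unfolding Om_def by blast
  obtain M where M: "subgroup M G" "Om \<subseteq> M" "2 * card M = card (carrier G)"
    using ex_idx2[OF assms(1-3) sOm Omne] by blast
  have n1: "n \<ge> 1" using M(3) assms(3) by (cases n) auto
  obtain n' where nn': "n = Suc n'" using n1 by (cases n) auto
  have "2 * card M = 2 * 2^n'" using M(3) assms(3) nn' by simp
  then have cM: "card M = 2^(n-1)" using nn' by simp
  define GM where "GM = G\<lparr>carrier := M\<rparr>"
  have GMc: "comm_group GM" unfolding GM_def using comm_group_sub[OF assms(1) M(1)] .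
  have finM: "finite M" using card_subgroup_pos[OF assms(2) M(1)] by blast
  have GMf: "finite (carrier GM)" unfolding GM_def using finM by simp
  have GMcard: "card (carrier GM) = 2^(n-1)" unfolding GM_def using cM by simp
  have sgiff: "subgroup K GM \<longleftrightarrow> subgroup K G \<and> K \<subseteq> M" for K
    unfolding GM_def using subgroup_sub_iff[OF is_group M(1)] .
  have Mc: "M \<subseteq> carrier G" using subgroup.subset[OF M(1)] .
  define S where "S = {H. subgroup H G \<and> card H = 2^k}"
  have finS: "finite S" unfolding S_def using finite_subgroups[OF assms(2)] .
  define S1 where "S1 = {K. subgroup K GM \<and> {\<one>} \<subseteq> K \<and> card K = 2^k}"
  define S2 where "S2 = {K \<in> S. \<not> K \<subseteq> M}"
  have S12: "S = S1 \<union> S2" unfolding S1_def S2_def S_def using sgiff subgroup.one_closed by blast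
  have dis: "S1 \<inter> S2 = {}" unfolding S1_def S2_def using sgiff by blast
  have finS1: "finite S1" using finS S12 by simp
  have finS2: "finite S2" using finS S12 by simp
  have cS: "card S = card S1 + card S2" using S12 dis card_Un_disjoint[OF finS1 finS2] by simp
  have trivGM: "subgroup {\<one>} GM"
  proof -
    have "subgroup {\<one>} G" using triv_subgroup .
    then show ?thesis using sgiff subgroup.one_closed[OF M(1)] by blast
  qed
  have S1b: "card S1 \<le> gg (n - 1) k"
    using GL[OF GMc GMf GMcard trivGM, of 0 k] unfolding S1_def by simp
  have xxM: "x \<otimes> x \<in> M" if "x \<in> carrier G - M" for x
  proof -
    have xc: "x \<in> carrier G" using that by blast
    have "inv x \<notin> M"
    proof
      assume "inv x \<in> M"
      then have "inv (inv x) \<in> M" using subgroup.m_inv_closed[OF M(1)] by blast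
      then show False using that xc by simp
    qed
    then have "inv x \<in> carrier G - M" using xc by simp
    then have "x \<in> M #> inv x" using idx2[OF is_group assms(2) M(1) M(3) _ that] by blast
    then obtain m where m: "m \<in> M" "x = m \<otimes> inv x" unfolding rcos_mem by blast
    have mc: "m \<in> carrier G" using m(1) Mc by blast
    have "x \<otimes> x = m" using m(2) mc xc by (metis inv_solve_right' inv_closed)
    then show ?thesis using m(1) by simp
  qed
  have S2b: "card S2 \<le> 2^(n-k) * h"
  proof (cases "k = 0")
    case True
    have "S2 = {}"
    proof -
      { fix K assume "K \<in> S2"
        then have K: "subgroup K G" "card K = 1" "\<not> K \<subseteq> M" unfolding S2_def S_def using True by auto
        have "\<one> \<in> K" using subgroup.one_closed[OF K(1)] .
        then have "K = {\<one>}" using K(2) by (metis card_1_singletonE singletonD)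
        then have False using K(3) subgroup.one_closed[OF M(1)] by blast
      }
      then show ?thesis by blast
    qed
    then show ?thesis by simp
  next
    case False
    then have k1: "1 \<le> k" by simp
    define T where "T = {K'. subgroup K' GM \<and> card K' = 2^(k-1)}"
    have finT: "finite T" unfolding T_def using finite_subgroups[OF GMf] .
    define XQ where "XQ = (\<lambda>K'. {x \<in> carrier G - M. x \<otimes> x \<in> K'})"
    define CQ where "CQ = (\<lambda>K'. (\<lambda>x. K' #> x) ` XQ K')"
    have finXQ: "finite (XQ K')" for K' unfolding XQ_def using assms(2) by simp
    have finCQ: "finite (CQ K')" for K' unfolding CQ_def using finXQ by simp
    have Tprops: "subgroup K' G" "K' \<subseteq> M" "card K' = 2^(k-1)" if "K' \<in> T" for K'
      using that sgiff[of K'] unfolding T_def by auto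
    have cCQ: "card (CQ K') * 2^(k-1) = card (XQ K')" if tt: "K' \<in> T" for K'
    proof -
      note K' = Tprops[OF tt]
      have inv: "kk \<otimes> x \<in> XQ K'" if "kk \<in> K'" "x \<in> XQ K'" for kk x
      proof -
        have x: "x \<in> carrier G - M" "x \<otimes> x \<in> K'" using that(2) unfolding XQ_def by auto
        have kc: "kk \<in> carrier G" using that(1) K'(2) Mc by blast
        have "kk \<otimes> x \<in> K' #> x" unfolding rcos_mem using that(1) by blast
        then have o: "kk \<otimes> x \<in> carrier G - M" using rcos_outside[OF is_group M(1) K'(1) K'(2) x(1)] by blast
        have "(kk \<otimes> x) \<otimes> (kk \<otimes> x) = (kk \<otimes> kk) \<otimes> (x \<otimes> x)" using kc x(1) by (simp add: m_ac)
        moreover have "(kk \<otimes> kk) \<otimes> (x \<otimes> x) \<in> K'"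
          using subgroup.m_closed[OF K'(1) subgroup.m_closed[OF K'(1) that(1) that(1)] x(2)] .
        ultimately show ?thesis unfolding XQ_def using o by simp
      qed
      have Xs: "XQ K' \<subseteq> carrier G - M" unfolding XQ_def by blast
      show ?thesis
        using cos_count[OF is_group assms(2) M(1) K'(1) K'(2) Xs inv] K'(3) unfolding CQ_def by simp
    qed
    define f where "f = (\<lambda>K. (K \<inter> M, K - M))"
    have inj: "inj_on f S2" unfolding f_def inj_on_def by (metis Int_Diff_Un prod.inject)
    have img: "f ` S2 \<subseteq> Sigma T CQ"
    proof
      fix z assume "z \<in> f ` S2"
      then obtain K where K: "K \<in> S2" "z = f K" by blast
      have Ks: "subgroup K G" "card K = 2^k" "\<not> K \<subseteq> M" using K(1) unfolding S2_def S_def by auto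
      obtain x where x: "x \<in> K - M" using Ks(3) by blast
      have e1: "K - M = (K \<inter> M) #> x" and e2: "card K = 2 * card (K \<inter> M)"
        using idx2_split[OF is_group assms(2) M(1) M(3) Ks(1) x] by auto
      obtain k' where kk': "k = Suc k'" using k1 by (cases k) auto
      have "2 * card (K \<inter> M) = 2 * 2^k'" using e2 Ks(2) kk' by simp
      then have "card (K \<inter> M) = 2^(k-1)" using kk' by simp
      moreover have "subgroup (K \<inter> M) GM" using sgiff[of "K \<inter> M"] subgroups_Inter_pair[OF Ks(1) M(1)] by blast
      ultimately have KT: "K \<inter> M \<in> T" unfolding T_def by blast
      have xc: "x \<in> carrier G - M" using x subgroup.subset[OF Ks(1)] by blast
      have "x \<otimes> x \<in> K" using subgroup.m_closed[OF Ks(1)] x by blast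
      then have "x \<otimes> x \<in> K \<inter> M" using xxM[OF xc] by blast
      then have "x \<in> XQ (K \<inter> M)" unfolding XQ_def using xc by blast
      then have "K - M \<in> CQ (K \<inter> M)" unfolding CQ_def using e1 by blast
      then show "z \<in> Sigma T CQ" unfolding K(2) f_def using KT by blast
    qed
    define Y where "Y = (\<lambda>x. {K' \<in> T. x \<otimes> x \<in> K'})"
    have finY: "finite (Y x)" for x unfolding Y_def using finT by simp
    have Yb: "card (Y x) \<le> h" if xx: "x \<in> carrier G - M" for x
    proof -
      have xxm: "x \<otimes> x \<in> M" using xxM[OF xx] .
      have xx1: "x \<otimes> x \<noteq> \<one>" using xx M(2) unfolding Om_def by blast
      have "Y x \<subseteq> {K. subgroup K GM \<and> x \<otimes> x \<in> K \<and> card K = 2^(k-1)}"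
        unfolding Y_def T_def by blast
      moreover have fin2: "finite {K. subgroup K GM \<and> x \<otimes> x \<in> K \<and> card K = 2^(k-1)}"
        by (rule finite_subgroups[OF GMf])
      ultimately have "card (Y x) \<le> card {K. subgroup K GM \<and> x \<otimes> x \<in> K \<and> card K = 2^(k-1)}"
        using card_mono by blast
      also have "\<dots> \<le> (if 1 \<le> k - 1 then gg (n - 1 - 1) (k - 1 - 1) else 0)"
      proof -
        have y1: "x \<otimes> x \<in> carrier GM" unfolding GM_def using xxm by simp
        have y2: "x \<otimes> x \<noteq> \<one>\<^bsub>GM\<^esub>" unfolding GM_def using xx1 by simp
        show ?thesis using count_containing[OF GMc GMf GMcard y1 y2, of "k - 1"] .
      qed
      also have "\<dots> = h" unfolding h_def by (simp add: numeral_2_eq_2 le_diff_conv2)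
      finally show ?thesis .
    qed
    have "card S2 * 2^(k-1) \<le> card (Sigma T CQ) * 2^(k-1)"
      using card_inj_on_le[OF inj img] finT finCQ by simp
    also have "\<dots> = (\<Sum>K'\<in>T. card (CQ K') * 2^(k-1))" using finT finCQ by (simp add: sum_distrib_right)
    also have "\<dots> = (\<Sum>K'\<in>T. card (XQ K'))" using cCQ by simp
    also have "\<dots> = card (Sigma T XQ)" using finT finXQ by simp
    also have "Sigma T XQ = (\<lambda>(x, K'). (K', x)) ` Sigma (carrier G - M) Y"
      unfolding XQ_def Y_def by auto
    also have "card \<dots> = card (Sigma (carrier G - M) Y)"
      by (rule card_image) (auto simp: inj_on_def)
    also have "\<dots> = (\<Sum>x\<in>carrier G - M. card (Y x))" using assms(2) finY by simp
    also have "\<dots> \<le> card (carrier G - M) * h" using Yb sum_bounded_above[of "carrier G - M" "\<lambda>x. card (Y x)" h] by simp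
    also have "card (carrier G - M) = 2^(n-1)"
    proof -
      have "card (carrier G - M) = card (carrier G) - card M" using card_Diff_subset[OF finM Mc] .
      then show ?thesis using M(3) cM by simp
    qed
    finally have *: "card S2 * 2^(k-1) \<le> 2^(n-1) * h" .
    have "2^(n-1) = (2::nat)^(n-k) * 2^(k-1)" using k1 assms(5) by (simp add: power_add[symmetric])
    then have "card S2 * 2^(k-1) \<le> (2^(n-k) * h) * 2^(k-1)" using * by (simp add: ac_simps)
    then show ?thesis by simp
  qed
  show ?thesis using cS S1b S2b unfolding S_def h_def by linarith
qed


lemma elem_comm:
  fixes G (structure)
  assumes "group G" "\<forall>x\<in>carrier G. x \<otimes> x = \<one>"
  shows "comm_group G"
proof -
  interpret group G by fact
  have iv: "inv x = x" if "x \<in> carrier G" for x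
    using inv_equality[of x x] assms(2) that by simp
  show ?thesis
  proof (rule group_comm_groupI)
    fix x y assume xy: "x \<in> carrier G" "y \<in> carrier G"
    have "x \<otimes> y = inv (x \<otimes> y)" using iv[of "x \<otimes> y"] xy by simp
    also have "\<dots> = inv y \<otimes> inv x" using xy by (simp add: inv_mult_group)
    also have "\<dots> = y \<otimes> x" using iv xy by simp
    finally show "x \<otimes> y = y \<otimes> x" .
  qed
qed

lemma dih_double:
  fixes G (structure)
  assumes "group G" "subgroup K G" "x \<in> carrier G" "x \<otimes> x \<in> K" "z \<in> K"
    and "\<And>b. b \<in> K \<Longrightarrow> x \<otimes> b = b \<otimes> x \<or> x \<otimes> b = z \<otimes> (b \<otimes> x)"
  shows "subgroup (K \<union> (K #> x)) G"
proof -
  interpret group G by fact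
  have Kc: "K \<subseteq> carrier G" using subgroup.subset[OF assms(2)] .
  have mc: "k1 \<otimes> k2 \<in> K" if "k1 \<in> K" "k2 \<in> K" for k1 k2
    using subgroup.m_closed[OF assms(2) that] .
  have ic: "inv k \<in> K" if "k \<in> K" for k
    using subgroup.m_inv_closed[OF assms(2) that] .
  have kc: "k \<in> carrier G" if "k \<in> K" for k using that Kc by blast
  have zc: "z \<in> carrier G" using kc assms(5) by blast
  have xc: "x \<in> carrier G" by fact
  have sw: "\<exists>k'\<in>K. x \<otimes> b = k' \<otimes> x" if "b \<in> K" for b
  proof -
    from assms(6)[OF that] show ?thesis
    proof
      assume "x \<otimes> b = b \<otimes> x" then show ?thesis using that by blast
    next
      assume "x \<otimes> b = z \<otimes> (b \<otimes> x)"
      then have "x \<otimes> b = (z \<otimes> b) \<otimes> x" using zc kc[OF that] xc by (simp add: m_assoc)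
      then show ?thesis using mc[OF assms(5) that] by blast
    qed
  qed
  let ?U = "K \<union> (K #> x)"
  have mU: "a \<otimes> b \<in> ?U" if "a \<in> ?U" "b \<in> ?U" for a b
  proof -
    from that(1) consider "a \<in> K" | k where "k \<in> K" "a = k \<otimes> x" unfolding Un_iff rcos_mem by blast
    then show ?thesis
    proof cases
      case 1
      from that(2) consider "b \<in> K" | l where "l \<in> K" "b = l \<otimes> x" unfolding Un_iff rcos_mem by blast
      then show ?thesis
      proof cases
        case 1 then show ?thesis using mc \<open>a \<in> K\<close> by blast
      next
        case 2
        have "a \<otimes> b = (a \<otimes> l) \<otimes> x" using 2 kc[OF 2(1)] kc[OF \<open>a \<in> K\<close>] xc by (simp add: m_assoc)
        then show ?thesis using mc[OF \<open>a \<in> K\<close> 2(1)] unfolding Un_iff rcos_mem by blast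
      qed
    next
      case 2
      from that(2) consider "b \<in> K" | l where "l \<in> K" "b = l \<otimes> x" unfolding Un_iff rcos_mem by blast
      then show ?thesis
      proof cases
        case 1
        obtain k' where k': "k' \<in> K" "x \<otimes> b = k' \<otimes> x" using sw[OF 1] by blast
        have "a \<otimes> b = k \<otimes> (x \<otimes> b)" using 2 kc[OF 2(1)] kc[OF 1] xc by (simp add: m_assoc)
        also have "\<dots> = (k \<otimes> k') \<otimes> x" using k' kc[OF 2(1)] kc[OF k'(1)] xc by (simp add: m_assoc)
        finally show ?thesis using mc[OF 2(1) k'(1)] unfolding Un_iff rcos_mem by blast
      next
        case 3: 2
        obtain k' where k': "k' \<in> K" "x \<otimes> l = k' \<otimes> x" using sw[OF 3(1)] by blast
        have "a \<otimes> b = k \<otimes> (x \<otimes> l) \<otimes> x" using 2 3 kc[OF 2(1)] kc[OF 3(1)] xc by (simp add: m_assoc)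
        also have "\<dots> = (k \<otimes> k') \<otimes> (x \<otimes> x)" using k' kc[OF 2(1)] kc[OF k'(1)] xc by (simp add: m_assoc)
        finally show ?thesis using mc[OF mc[OF 2(1) k'(1)] assms(4)] by (metis UnI1)
      qed
    qed
  qed
  show ?thesis
  proof (rule subgroupI)
    show "?U \<subseteq> carrier G" using Kc r_coset_subset_G[OF Kc xc] by blast
    show "?U \<noteq> {}" using subgroup.one_closed[OF assms(2)] by blast
  next
    fix a assume a: "a \<in> ?U"
    have ix: "inv x \<in> ?U"
    proof -
      have "inv x = inv (x \<otimes> x) \<otimes> x" using xc by (simp add: inv_mult_group m_assoc)
      then show ?thesis using ic[OF assms(4)] unfolding Un_iff rcos_mem by blast
    qed
    from a consider "a \<in> K" | k where "k \<in> K" "a = k \<otimes> x" unfolding Un_iff rcos_mem by blast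
    then show "inv a \<in> ?U"
    proof cases
      case 1 then show ?thesis using ic by blast
    next
      case 2
      have "inv a = inv x \<otimes> inv k" using 2 kc[OF 2(1)] xc by (simp add: inv_mult_group)
      moreover have "inv k \<in> ?U" using ic[OF 2(1)] by blast
      ultimately show ?thesis using mU[OF ix] by simp
    qed
  next
    fix a b assume "a \<in> ?U" "b \<in> ?U" then show "a \<otimes> b \<in> ?U" by (rule mU)
  qed
qed


lemma DL:
  fixes G (structure)
  assumes "group G" "finite (carrier G)" "card (carrier G) = 2^n"
    and "subgroup B G" "2 * card B = card (carrier G)" "\<forall>y\<in>B. y \<otimes> y = \<one>"
    and "z \<in> B" "z \<noteq> \<one>"
    and "\<forall>x\<in>carrier G - B. (x \<otimes> x = \<one> \<or> x \<otimes> x = z) \<and> (\<forall>b\<in>B. x \<otimes> b = b \<otimes> x \<or> x \<otimes> b = z \<otimes> (b \<otimes> x))"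
    and "k \<le> n"
  shows "gg (n - 1) k + 2^(n-k) * (if 2 \<le> k then gg (n - 2) (k - 2) else 0)
           \<le> card {H. subgroup H G \<and> card H = 2^k}"
proof -
  interpret group G by fact
  have Bc: "B \<subseteq> carrier G" using subgroup.subset[OF assms(4)] .
  have finB: "finite B" using card_subgroup_pos[OF assms(2,4)] by blast
  have n1: "n \<ge> 1" using assms(5) assms(3) by (cases n) auto
  obtain n' where nn': "n = Suc n'" using n1 by (cases n) auto
  have "2 * card B = 2 * 2^n'" using assms(5) assms(3) nn' by simp
  then have cB: "card B = 2^(n-1)" using nn' by simp
  define GB where "GB = G\<lparr>carrier := B\<rparr>"
  have GBg: "group GB" unfolding GB_def using subgroup_imp_group[OF assms(4)] .
  have GBel: "\<forall>x\<in>carrier GB. x \<otimes>\<^bsub>GB\<^esub> x = \<one>\<^bsub>GB\<^esub>" unfolding GB_def using assms(6) by simp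
  have GBc: "comm_group GB" using elem_comm[OF GBg GBel] .
  have GBf: "finite (carrier GB)" unfolding GB_def using finB by simp
  have GBcard: "card (carrier GB) = 2^(n-1)" unfolding GB_def using cB by simp
  have sgiff: "subgroup K GB \<longleftrightarrow> subgroup K G \<and> K \<subseteq> B" for K
    unfolding GB_def using subgroup_sub_iff[OF is_group assms(4)] .
  define S where "S = {H. subgroup H G \<and> card H = 2^k}"
  have finS: "finite S" unfolding S_def using finite_subgroups[OF assms(2)] .
  define S1 where "S1 = {K. subgroup K GB \<and> {\<one>} \<subseteq> K \<and> card K = 2^k}"
  define S2 where "S2 = {K \<in> S. \<not> K \<subseteq> B}"
  have S1S: "S1 \<subseteq> S" unfolding S1_def S_def using sgiff by blast
  have S2S: "S2 \<subseteq> S" unfolding S2_def by blast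
  have dis: "S1 \<inter> S2 = {}" unfolding S1_def S2_def using sgiff by blast
  have finS1: "finite S1" using finS S1S finite_subset by blast
  have finS2: "finite S2" using finS S2S finite_subset by blast
  have cS: "card S1 + card S2 \<le> card S"
    using card_Un_disjoint[OF finS1 finS2 dis] card_mono[OF finS] S1S S2S by (metis Un_subset_iff)
  have trivGB: "subgroup {\<one>} GB"
    using sgiff[of "{\<one>}"] triv_subgroup subgroup.one_closed[OF assms(4)] by blast
  have S1b: "gg (n - 1) k \<le> card S1"
    using LL[OF GBc GBf GBcard trivGB _ GBel, of 0 k] unfolding S1_def by simp
  show ?thesis
  proof (cases "2 \<le> k")
    case False
    then show ?thesis using S1b cS unfolding S_def by simp
  next
    case k2: True
    define Z where "Z = {\<one>, z}"
    have zc: "z \<in> carrier G" using assms(7) Bc by blast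
    have zz: "z \<otimes> z = \<one>" using assms(6,7) by blast
    have izz: "inv z = z" using inv_equality[OF zz zc zc] .
    have sZ: "subgroup Z G"
    proof (rule subgroupI)
      show "Z \<subseteq> carrier G" unfolding Z_def using zc by simp
      show "Z \<noteq> {}" unfolding Z_def by simp
    next
      fix a assume "a \<in> Z" then show "inv a \<in> Z" unfolding Z_def using izz by auto
    next
      fix a b assume "a \<in> Z" "b \<in> Z" then show "a \<otimes> b \<in> Z" unfolding Z_def using zz zc by auto
    qed
    have ZGB: "subgroup Z GB" using sgiff[of Z] sZ assms(7) subgroup.one_closed[OF assms(4)]
      unfolding Z_def by blast
    have cZ: "card Z = 2^1" unfolding Z_def using assms(8) by simp
    define T where "T = {K. subgroup K GB \<and> Z \<subseteq> K \<and> card K = 2^(k-1)}"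
    have finT: "finite T" unfolding T_def using finite_subgroups[OF GBf] .
    have k11: "1 \<le> k - 1" using k2 by simp
    have Tb: "gg (n - 1 - 1) (k - 1 - 1) \<le> card T"
      unfolding T_def by (rule LL[OF GBc GBf GBcard ZGB cZ GBel k11])
    have Tprops: "subgroup K' G" "K' \<subseteq> B" "card K' = 2^(k-1)" "Z \<subseteq> K'" if tt: "K' \<in> T" for K'
    proof -
      have K0: "subgroup K' GB" "card K' = 2^(k-1)" "Z \<subseteq> K'" using tt unfolding T_def by auto
      then show "subgroup K' G" "K' \<subseteq> B" "card K' = 2^(k-1)" "Z \<subseteq> K'" using sgiff[of K'] by auto
    qed
    define Cos where "Cos = (\<lambda>K'. (\<lambda>x. K' #> x) ` (carrier G - B))"
    have "card (carrier G - B) = card (carrier G) - card B" using card_Diff_subset[OF finB Bc] .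
    then have cCB: "card (carrier G - B) = 2^(n-1)" using assms(5) cB by simp
    have cCos: "card (Cos K') = 2^(n-k)" if tt: "K' \<in> T" for K'
    proof -
      note K' = Tprops[OF tt]
      have inv: "kk \<otimes> x \<in> carrier G - B" if "kk \<in> K'" "x \<in> carrier G - B" for kk x
      proof -
        have "kk \<otimes> x \<in> K' #> x" unfolding rcos_mem using that(1) by blast
        then show ?thesis using rcos_outside[OF is_group assms(4) K'(1) K'(2) that(2)] by blast
      qed
      have "card (Cos K') * card K' = card (carrier G - B)" unfolding Cos_def
        using cos_count[OF is_group assms(2) assms(4) K'(1) K'(2) subset_refl inv] .
      then have "card (Cos K') * 2^(k-1) = 2^(n-k) * 2^(k-1)"
        using K'(3) cCB assms(10) k2 by (simp add: power_add[symmetric])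
      then show ?thesis by simp
    qed
    have finCos: "finite (Cos K')" for K' unfolding Cos_def using assms(2) by simp
    have CosProps: "C \<subseteq> carrier G - B" "\<exists>x\<in>carrier G - B. C = K' #> x"
      if aa: "K' \<in> T" "C \<in> Cos K'" for K' C
    proof -
      note K' = Tprops[OF aa(1)]
      obtain x where x: "x \<in> carrier G - B" "C = K' #> x" using aa(2) unfolding Cos_def by blast
      then show "C \<subseteq> carrier G - B" using rcos_outside[OF is_group assms(4) K'(1) K'(2) x(1)] by blast
      show "\<exists>x\<in>carrier G - B. C = K' #> x" using x by blast
    qed
    define F where "F = (\<lambda>(K'::'a set, C::'a set). K' \<union> C)"
    have Fsplit: "F w \<inter> B = fst w" "F w - B = snd w" if zz: "w \<in> Sigma T Cos" for w
    proof -
      obtain K' C where w: "w = (K', C)" "K' \<in> T" "C \<in> Cos K'" using zz by blast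
      have "K' \<subseteq> B" using Tprops[OF w(2)] by blast
      moreover have "C \<subseteq> carrier G - B" using CosProps[OF w(2,3)] by blast
      ultimately show "F w \<inter> B = fst w" "F w - B = snd w" unfolding w F_def by auto
    qed
    have inj: "inj_on F (Sigma T Cos)"
    proof (rule inj_onI)
      fix z1 z2 assume a: "z1 \<in> Sigma T Cos" "z2 \<in> Sigma T Cos" "F z1 = F z2"
      have "fst z1 = fst z2" using Fsplit(1)[OF a(1)] Fsplit(1)[OF a(2)] a(3) by simp
      moreover have "snd z1 = snd z2" using Fsplit(2)[OF a(1)] Fsplit(2)[OF a(2)] a(3) by simp
      ultimately show "z1 = z2" by (simp add: prod_eq_iff)
    qed
    have img: "F ` Sigma T Cos \<subseteq> S2"
    proof
      fix w assume "w \<in> F ` Sigma T Cos"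
      then obtain y where yS: "y \<in> Sigma T Cos" and wy: "w = F y" by blast
      then obtain K' C where yKC: "y = (K', C)" "K' \<in> T" "C \<in> Cos K'" by blast
      then have z: "w = K' \<union> C" "K' \<in> T" "C \<in> Cos K'" using wy unfolding F_def by auto
      note K' = Tprops[OF z(2)]
      obtain x where x: "x \<in> carrier G - B" "C = K' #> x" using CosProps(2)[OF z(2,3)] by blast
      have xc: "x \<in> carrier G" using x(1) by blast
      have zK: "z \<in> K'" using K'(4) unfolding Z_def by blast
      have oK: "\<one> \<in> K'" using K'(4) unfolding Z_def by blast
      have xx: "x \<otimes> x \<in> K'" using assms(9) x(1) zK oK by metis
      have comm: "x \<otimes> b = b \<otimes> x \<or> x \<otimes> b = z \<otimes> (b \<otimes> x)" if "b \<in> K'" for b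
        using assms(9) x(1) that K'(2) by blast
      have sg: "subgroup w G" unfolding z(1) x(2) using dih_double[OF is_group K'(1) xc xx zK comm] .
      have Cc: "C \<subseteq> carrier G - B" using CosProps(1)[OF z(2,3)] .
      have fK: "finite K'" using card_subgroup_pos[OF assms(2) K'(1)] by blast
      have fC: "finite C" using Cc assms(2) finite_subset by blast
      have cC: "card C = card K'" unfolding x(2)
        using card_rcosets_equal[OF rcosetsI[OF subgroup.subset[OF K'(1)] xc] subgroup.subset[OF K'(1)]] by simp
      have "K' \<inter> C = {}" using K'(2) Cc by blast
      then have "card w = 2 * 2^(k-1)" unfolding z(1) using card_Un_disjoint[OF fK fC] cC K'(3) by simp
      also have "\<dots> = 2^k"
      proof -
        obtain j' where jj': "k = Suc j'" using k2 by (cases k) auto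
        then show ?thesis by simp
      qed
      finally have cw: "card w = 2^k" .
      have "x \<in> C" unfolding x(2) using rcos_self[OF xc K'(1)] .
      then have nM: "\<not> w \<subseteq> B" unfolding z(1) using x(1) by blast
      then show "w \<in> S2" unfolding S2_def S_def using sg cw nM by blast
    qed
    have "2^(n-k) * card T = (\<Sum>K'\<in>T. card (Cos K'))" using cCos by simp
    also have "\<dots> = card (Sigma T Cos)" using finT finCos by simp
    also have "\<dots> = card (F ` Sigma T Cos)" using card_image[OF inj] by simp
    also have "\<dots> \<le> card S2" using card_mono[OF finS2 img] .
    finally have S2b: "2^(n-k) * card T \<le> card S2" .
    have "gg (n - 1) k + 2^(n-k) * (if 2 \<le> k then gg (n - 2) (k - 2) else 0)
          = gg (n - 1) k + 2^(n-k) * gg (n - 1 - 1) (k - 1 - 1)" using k2 by (simp add: numeral_2_eq_2)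
    also have "\<dots> \<le> card S1 + 2^(n-k) * card T"
      using add_mono[OF S1b mult_le_mono2[OF Tb]] .
    also have "\<dots> \<le> card S" using cS S2b by simp
    finally show ?thesis unfolding S_def .
  qed
qed


section \<open>The concrete group D8 x C2^m\<close>

definition d8m :: "nat \<times> bool \<Rightarrow> nat \<times> bool \<Rightarrow> nat \<times> bool" where
  "d8m = (\<lambda>(a1, b1) (a2, b2). ((a1 + (if b1 then 4 - a2 else a2)) mod 4, b1 \<noteq> b2))"

lemma D8_mult: "(a1, b1) \<otimes>\<^bsub>D8\<^esub> (a2, b2) = ((a1 + (if b1 then 4 - a2 else a2)) mod 4, b1 \<noteq> b2)"
  by (simp add: D8_def)

lemma D8_carrier: "carrier D8 = {..<4} \<times> UNIV"
  by (auto simp: D8_def)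

lemma D8_one: "\<one>\<^bsub>D8\<^esub> = (0, False)"
  by (simp add: D8_def)

lemma lt4_cases: "(a::nat) < 4 \<Longrightarrow> a = 0 \<or> a = 1 \<or> a = 2 \<or> a = 3"
  by auto

lemma D8_assoc_raw:
  assumes "(a1::nat) < 4" "(a2::nat) < 4" "(a3::nat) < 4"
  shows "((a1 + (if b1 then 4 - ((a2 + (if b2 then 4 - a3 else a3)) mod 4) else ((a2 + (if b2 then 4 - a3 else a3)) mod 4))) mod 4)
       = ((((a1 + (if b1 then 4 - a2 else a2)) mod 4) + (if b1 \<noteq> b2 then 4 - a3 else a3)) mod 4)"
  using lt4_cases[OF assms(1)] lt4_cases[OF assms(2)] lt4_cases[OF assms(3)]
  by (cases b1; cases b2; auto)

lemma D8_group: "group D8"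
proof (rule groupI)
  fix x y assume "x \<in> carrier D8" "y \<in> carrier D8"
  then show "x \<otimes>\<^bsub>D8\<^esub> y \<in> carrier D8" by (cases x, cases y) (simp add: D8_mult D8_carrier)
next
  show "\<one>\<^bsub>D8\<^esub> \<in> carrier D8" by (simp add: D8_one D8_carrier)
next
  fix x y z assume "x \<in> carrier D8" "y \<in> carrier D8" "z \<in> carrier D8"
  then show "x \<otimes>\<^bsub>D8\<^esub> y \<otimes>\<^bsub>D8\<^esub> z = x \<otimes>\<^bsub>D8\<^esub> (y \<otimes>\<^bsub>D8\<^esub> z)"
    by (cases x, cases y, cases z) (auto simp: D8_mult D8_carrier D8_assoc_raw)
next
  fix x assume "x \<in> carrier D8"
  then show "\<one>\<^bsub>D8\<^esub> \<otimes>\<^bsub>D8\<^esub> x = x" by (cases x) (simp add: D8_mult D8_one D8_carrier)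
next
  fix x assume x: "x \<in> carrier D8"
  obtain a b where ab: "x = (a, b)" "a < 4" using x by (cases x) (auto simp: D8_carrier)
  show "\<exists>y\<in>carrier D8. y \<otimes>\<^bsub>D8\<^esub> x = \<one>\<^bsub>D8\<^esub>"
  proof (cases b)
    case True
    then show ?thesis using ab by (intro bexI[of _ "(a, True)"]) (auto simp: D8_mult D8_one D8_carrier)
  next
    case False
    then show ?thesis using ab lt4_cases[OF ab(2)]
      by (intro bexI[of _ "((4 - a) mod 4, False)"]) (auto simp: D8_mult D8_one D8_carrier)
  qed
qed

lemma C2_mult: "v \<otimes>\<^bsub>C2pow m\<^esub> w = (\<lambda>i. v i \<noteq> w i)"
  by (simp add: C2pow_def)

lemma C2_one: "\<one>\<^bsub>C2pow m\<^esub> = (\<lambda>_. False)"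
  by (simp add: C2pow_def)

lemma C2_carrier: "carrier (C2pow m) = {v. \<forall>i\<ge>m. \<not> v i}"
  by (simp add: C2pow_def)

lemma C2_group: "group (C2pow m)"
proof (rule groupI)
  fix x y assume "x \<in> carrier (C2pow m)" "y \<in> carrier (C2pow m)"
  then show "x \<otimes>\<^bsub>C2pow m\<^esub> y \<in> carrier (C2pow m)" by (simp add: C2_mult C2_carrier)
next
  show "\<one>\<^bsub>C2pow m\<^esub> \<in> carrier (C2pow m)" by (simp add: C2_one C2_carrier)
next
  fix x y z assume "x \<in> carrier (C2pow m)" "y \<in> carrier (C2pow m)" "z \<in> carrier (C2pow m)"
  show "x \<otimes>\<^bsub>C2pow m\<^esub> y \<otimes>\<^bsub>C2pow m\<^esub> z = x \<otimes>\<^bsub>C2pow m\<^esub> (y \<otimes>\<^bsub>C2pow m\<^esub> z)"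
    by (auto simp: C2_mult fun_eq_iff)
next
  fix x assume "x \<in> carrier (C2pow m)"
  show "\<one>\<^bsub>C2pow m\<^esub> \<otimes>\<^bsub>C2pow m\<^esub> x = x" by (simp add: C2_mult C2_one)
next
  fix x assume x: "x \<in> carrier (C2pow m)"
  show "\<exists>y\<in>carrier (C2pow m). y \<otimes>\<^bsub>C2pow m\<^esub> x = \<one>\<^bsub>C2pow m\<^esub>"
    using x by (intro bexI[of _ x]) (auto simp: C2_mult C2_one)
qed

lemma C2_card: "card (carrier (C2pow m)) = 2^m"
proof -
  have "bij_betw (\<lambda>v. {i. v i}) (carrier (C2pow m)) (Pow {..<m})"
  proof (rule bij_betwI[where g = "\<lambda>S i. i \<in> S"])
    show "(\<lambda>v. {i. v i}) \<in> carrier (C2pow m) \<rightarrow> Pow {..<m}"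
      by (auto simp: C2_carrier) (meson not_le)
    show "(\<lambda>S i. i \<in> S) \<in> Pow {..<m} \<rightarrow> carrier (C2pow m)"
      by (auto simp: C2_carrier)
  qed auto
  then have "card (carrier (C2pow m)) = card (Pow {..<m::nat})" by (rule bij_betw_same_card)
  then show ?thesis by (simp add: card_Pow)
qed


lemma D_mult: "((a1, b1), v) \<otimes>\<^bsub>D8 \<times>\<times> C2pow m\<^esub> ((a2, b2), w)
    = (((a1 + (if b1 then 4 - a2 else a2)) mod 4, b1 \<noteq> b2), (\<lambda>i. v i \<noteq> w i))"
  by (simp add: DirProd_def D8_mult C2_mult)

lemma D_one: "\<one>\<^bsub>D8 \<times>\<times> C2pow m\<^esub> = ((0, False), (\<lambda>_. False))"
  by (simp add: DirProd_def D8_one C2_one)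

lemma D_carrier: "carrier (D8 \<times>\<times> C2pow m) = ({..<4} \<times> UNIV) \<times> carrier (C2pow m)"
  by (simp add: DirProd_def D8_carrier)

lemma C2_finite: "finite (carrier (C2pow m))"
proof -
  have "card (carrier (C2pow m)) > 0" by (simp add: C2_card)
  then show ?thesis using card_ge_0_finite by blast
qed

lemma D_lower:
  assumes "k \<le> m + 3"
  shows "gg (m + 3 - 1) k + 2^(m + 3 - k) * (if 2 \<le> k then gg (m + 3 - 2) (k - 2) else 0)
           \<le> card {H. subgroup H (D8 \<times>\<times> C2pow m) \<and> card H = 2^k}"
proof -
  let ?D = "D8 \<times>\<times> C2pow m"
  define B where "B = ({0, 2::nat} \<times> (UNIV :: bool set)) \<times> carrier (C2pow m)"
  define z where "z = (((2::nat), False), (\<lambda>_::nat. False))"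
  have gD: "group ?D" using DirProd_group[OF D8_group C2_group] .
  interpret D: group ?D by (rule gD)
  have finU: "finite ({..<4::nat} \<times> (UNIV :: bool set))" by simp
  have fD: "finite (carrier ?D)" unfolding D_carrier using finU C2_finite by simp
  have c8: "card ({..<4::nat} \<times> (UNIV :: bool set)) = 8" by (simp add: card_cartesian_product)
  have cD: "card (carrier ?D) = 2^(m+3)" unfolding D_carrier
    by (simp add: card_cartesian_product c8 C2_card power_add)
  have c4: "card ({0, 2::nat} \<times> (UNIV :: bool set)) = 4" by (simp add: card_cartesian_product)
  have cB: "2 * card B = card (carrier ?D)" unfolding B_def cD
    by (simp add: card_cartesian_product c4 C2_card power_add)
  have sq: "x \<otimes>\<^bsub>?D\<^esub> x = \<one>\<^bsub>?D\<^esub>" if xB: "x \<in> B" for x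
  proof -
    obtain a b v where x: "x = ((a, b), v)" "a = 0 \<or> a = 2" using xB unfolding B_def by auto
    show ?thesis using x by (auto simp: D_mult D_one D8_mult C2_mult D8_one C2_one fun_eq_iff)
  qed
  have BD: "B \<subseteq> carrier ?D" unfolding B_def D_carrier by auto
  have sB: "subgroup B ?D"
  proof (rule D.subgroupI)
    show "B \<subseteq> carrier ?D" by (rule BD)
    show "B \<noteq> {}" unfolding B_def using C2_group group.is_monoid monoid.one_closed by fastforce
  next
    fix a assume a: "a \<in> B"
    have "inv\<^bsub>?D\<^esub> a = a" using D.inv_equality[OF sq[OF a]] a BD by blast
    then show "inv\<^bsub>?D\<^esub> a \<in> B" using a by simp
  next
    fix x y assume "x \<in> B" "y \<in> B"
    then obtain a1 b1 v a2 b2 w where xy: "x = ((a1, b1), v)" "a1 = 0 \<or> a1 = 2" "v \<in> carrier (C2pow m)"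
        "y = ((a2, b2), w)" "a2 = 0 \<or> a2 = 2" "w \<in> carrier (C2pow m)"
      unfolding B_def by auto
    have "(\<lambda>i. v i \<noteq> w i) \<in> carrier (C2pow m)" using xy(3,6) by (simp add: C2_carrier)
    then show "x \<otimes>\<^bsub>?D\<^esub> y \<in> B" unfolding B_def using xy by (auto simp: D_mult D8_mult C2_mult)
  qed
  have zB: "z \<in> B" unfolding z_def B_def by (simp add: C2_carrier)
  have z1: "z \<noteq> \<one>\<^bsub>?D\<^esub>" unfolding z_def D_one by simp
  have zmul: "z \<otimes>\<^bsub>?D\<^esub> (((a, b), v)) = (((a + 2) mod 4, b), v)" if "a < 4" for a b v
    unfolding z_def using that by (auto simp: D_mult D8_mult C2_mult fun_eq_iff)
  have out: "(x \<otimes>\<^bsub>?D\<^esub> x = \<one>\<^bsub>?D\<^esub> \<or> x \<otimes>\<^bsub>?D\<^esub> x = z) \<and>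
      (\<forall>b\<in>B. x \<otimes>\<^bsub>?D\<^esub> b = b \<otimes>\<^bsub>?D\<^esub> x \<or> x \<otimes>\<^bsub>?D\<^esub> b = z \<otimes>\<^bsub>?D\<^esub> (b \<otimes>\<^bsub>?D\<^esub> x))"
    if xo: "x \<in> carrier ?D - B" for x
  proof -
    obtain a b v where x: "x = ((a, b), v)" "a = 1 \<or> a = 3"
      using xo lt4_cases unfolding B_def D_carrier by auto
    have p1: "x \<otimes>\<^bsub>?D\<^esub> x = \<one>\<^bsub>?D\<^esub> \<or> x \<otimes>\<^bsub>?D\<^esub> x = z"
      using x unfolding z_def by (cases b) (auto simp: D_mult D_one D8_mult C2_mult D8_one C2_one fun_eq_iff)
    have p2: "x \<otimes>\<^bsub>?D\<^esub> y = y \<otimes>\<^bsub>?D\<^esub> x \<or> x \<otimes>\<^bsub>?D\<^esub> y = z \<otimes>\<^bsub>?D\<^esub> (y \<otimes>\<^bsub>?D\<^esub> x)" if yB: "y \<in> B" for y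
    proof -
      obtain a2 b2 w where y: "y = ((a2, b2), w)" "a2 = 0 \<or> a2 = 2" using yB unfolding B_def by auto
      have lt: "(a2 + (if b2 then 4 - a else a)) mod 4 < 4" by simp
      show ?thesis
        unfolding x(1) y(1) D_mult zmul[OF lt]
        using x(2) y(2) by (cases b; cases b2) (auto simp: fun_eq_iff)
    qed
    show ?thesis using p1 p2 by blast
  qed
  have "gg (m + 3 - 1) k + 2^(m + 3 - k) * (if 2 \<le> k then gg (m + 3 - 2) (k - 2) else 0)
           \<le> card {H. subgroup H ?D \<and> card H = 2^k}"
    by (rule DL[OF gD fD cD sB cB _ zB z1 _ assms]) (use sq out in auto)
  then show ?thesis .
qed


theorem lemma2p3:
  fixes G :: "('a, 'b) monoid_scheme" and n k :: nat
  assumes "comm_group G"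
    and "finite (carrier G)"
    and "card (carrier G) = 2 ^ n"
    and "n \<ge> 3"
    and "\<not> (\<forall>x\<in>carrier G. x [^]\<^bsub>G\<^esub> (2::nat) = \<one>\<^bsub>G\<^esub>)"
    and "k \<le> n"
  shows "num_subgroups_of_order k G \<le> num_subgroups_of_order k (D8 \<times>\<times> C2pow (n - 3))"
proof -
  interpret comm_group G by fact
  have sq2: "x [^]\<^bsub>G\<^esub> (2::nat) = x \<otimes>\<^bsub>G\<^esub> x" if "x \<in> carrier G" for x
    using that by (metis One_nat_def nat_pow_Suc nat_pow_0 l_one numeral_2_eq_2)
  have ex: "\<exists>x\<in>carrier G. x \<otimes>\<^bsub>G\<^esub> x \<noteq> \<one>\<^bsub>G\<^esub>" using assms(5) sq2 by auto
  have U: "card {H. subgroup H G \<and> card H = 2^k}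
           \<le> gg (n - 1) k + 2^(n-k) * (if 2 \<le> k then gg (n - 2) (k - 2) else 0)"
    using MU[OF assms(1-3) ex assms(6)] .
  have e: "n - 3 + 3 = n" using assms(4) by simp
  have L: "gg (n - 1) k + 2^(n-k) * (if 2 \<le> k then gg (n - 2) (k - 2) else 0)
           \<le> card {H. subgroup H (D8 \<times>\<times> C2pow (n - 3)) \<and> card H = 2^k}"
    using D_lower[of k "n - 3"] assms(6) unfolding e by simp
  show ?thesis unfolding num_subgroups_of_order_def using U L by linarith
qed

end
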